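(* Let $D\subseteq[n]\times[n]$ be a diagram. Fix any diagram $C^{(1)}\le D$ and set $\bm{m}=\prod_{j=1}^n\prod_{i\in C^{(1)}_j}x_i$. Let $C^{(1)},\dots,C^{(r)}$ be all the diagrams $C$ with $C\le D$ and $\prod_{j=1}^n\prod_{i\in C_j}x_i=\bm{m}$. Then the coefficient of $\bm{m}$ in $\chi_D$ equals $$\dim\Big(\mathrm{Span}_{\mathbb{C}}\Big\{\prod_{j=1}^n\det\big(Y^{C^{(i)}_j}_{D_j}\big)\ :\ i\in[r]\Big\}\Big).$$
   Context: A diagram $D\subseteq[n]\times[n]$ is a set of boxes $(i,j)$ (row $i$, column $j$), identified with its column sequence $(D_1,\dots,D_n)$, $D_j=\{i:(i,j)\in D\}$. For $R,S\subseteq[n]$, $R\le S$ means $\#R=\#S$ and the $k$-th smallest element of $R$ is at most the $k$-th smallest element of $S$ for each $k$; for diagrams, $C\le D$ means $C_j\le D_j$ for all $j$. Let $Y$ be the $n\times n$ upper-triangular matrix with indeterminates $y_{ij}$ ($i\le j$) and zeros below the diagonal, and $Y^R_S$ its submatrix with rows $R$ and columns $S$ (determinant of the empty matrix is $1$). Let $B$ be the group of invertible upper-triangular complex $n\times n$ matrices acting on $\mathbb{C}[Y]$ by $(f\cdot b)(Y)=f(b^{-1}Y)$. The flagged Weyl module is $\mathcal{M}_D=\mathrm{Span}_{\mathbb{C}}\{\prod_{j=1}^n\det(Y^{C_j}_{D_j}): C\le D\}$, a $B$-module. For a $B$-module $N$, $\mathrm{char}(N)(x_1,\dots,x_n)$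 is the trace of $\mathrm{diag}(x_1,\dots,x_n)$ acting on $N$, and the dual character is $\mathrm{char}^*(N)(x_1,\dots,x_n)=\mathrm{char}(N)(x_1^{-1},\dots,x_n^{-1})$. Set $\chi_D=\mathrm{char}^*\mathcal{M}_D$. *)

theory Defs
  imports Complex_Main "HOL-Library.Poly_Mapping" "HOL-Combinatorics.Permutations"
begin

text \<open>Polynomials in the variables y_(i,j): finitely supported maps from monomials
  (exponent maps on index pairs) to complex coefficients.\<close>
type_synonym ymon = "(nat \<times> nat) \<Rightarrow>\<^sub>0 nat"
type_synonym ypoly = "ymon \<Rightarrow>\<^sub>0 complex"

definition cscale :: "complex \<Rightarrow> ypoly \<Rightarrow> ypoly" where
  "cscale c p = Poly_Mapping.map (\<lambda>v. c * v) p"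

abbreviation cspan :: "ypoly set \<Rightarrow> ypoly set" where
  "cspan \<equiv> module.span cscale"

abbreviation cdim :: "ypoly set \<Rightarrow> nat" where
  "cdim \<equiv> vector_space.dim cscale"

definition Yent :: "nat \<Rightarrow> nat \<Rightarrow> ypoly" where
  "Yent i j = (if i \<le> j then Poly_Mapping.single (Poly_Mapping.single (i, j) 1) 1 else 0)"

text \<open>det(Y^R_S): rows R, columns S (both in increasing order); the empty minor is 1.\<close>
definition minor :: "nat set \<Rightarrow> nat set \<Rightarrow> ypoly" where
  "minor R S = (if card R = card S then
     (\<Sum>p\<in>{p. p permutes {0..<card R}}. of_int (sign p) *
        (\<Prod>k<card R. Yent (sorted_list_of_set R ! k) (sorted_list_of_set S ! p k)))
   else 0)"

definition diagrams :: "nat \<Rightarrow> (nat \<times> nat) set set" where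
  "diagrams n = {D. D \<subseteq> {1..n} \<times> {1..n}}"

definition col :: "(nat \<times> nat) set \<Rightarrow> nat \<Rightarrow> nat set" where
  "col D j = {i. (i, j) \<in> D}"

definition set_le :: "nat set \<Rightarrow> nat set \<Rightarrow> bool" where
  "set_le R S \<longleftrightarrow> card R = card S \<and>
     (\<forall>k < card R. sorted_list_of_set R ! k \<le> sorted_list_of_set S ! k)"

definition diag_le :: "nat \<Rightarrow> (nat \<times> nat) set \<Rightarrow> (nat \<times> nat) set \<Rightarrow> bool" where
  "diag_le n C D \<longleftrightarrow> (\<forall>j\<in>{1..n}. set_le (col C j) (col D j))"

definition detprod :: "nat \<Rightarrow> (nat \<times> nat) set \<Rightarrow> (nat \<times> nat) set \<Rightarrow> ypoly" where
  "detprod n C D = (\<Prod>j\<in>{1..n}. minor (col C j) (col D j))"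

definition weyl_module :: "nat \<Rightarrow> (nat \<times> nat) set \<Rightarrow> ypoly set" where
  "weyl_module n D = cspan {detprod n C D | C. C \<in> diagrams n \<and> diag_le n C D}"

text \<open>Action of b = diag(x_1,...,x_n) in B: (f\<cdot>b)(Y) = f(b^{-1} Y), i.e. the substitution
  y_(i,j) \<mapsto> x_i^{-1} y_(i,j).\<close>
definition mon_weight :: "(nat \<Rightarrow> complex) \<Rightarrow> ymon \<Rightarrow> complex" where
  "mon_weight x mo = (\<Prod>ij\<in>Poly_Mapping.keys mo. inverse (x (fst ij)) ^ (Poly_Mapping.lookup mo ij))"

definition diag_act :: "(nat \<Rightarrow> complex) \<Rightarrow> ypoly \<Rightarrow> ypoly" where
  "diag_act x f = Abs_poly_mapping (\<lambda>mo. Poly_Mapping.lookup f mo * mon_weight x mo)"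

definition trace_on :: "ypoly set \<Rightarrow> (ypoly \<Rightarrow> ypoly) \<Rightarrow> complex" where
  "trace_on W T = (let B = (SOME B. B \<subseteq> W \<and> \<not> module.dependent cscale B \<and> W \<subseteq> cspan B)
     in (\<Sum>b\<in>B. module.representation cscale B (T b) b))"

definition char_mod :: "ypoly set \<Rightarrow> (nat \<Rightarrow> complex) \<Rightarrow> complex" where
  "char_mod N x = trace_on N (diag_act x)"

definition dual_char :: "ypoly set \<Rightarrow> (nat \<Rightarrow> complex) \<Rightarrow> complex" where
  "dual_char N x = char_mod N (\<lambda>i. inverse (x i))"

definition chi :: "nat \<Rightarrow> (nat \<times> nat) set \<Rightarrow> (nat \<Rightarrow> complex) \<Rightarrow> complex" where
  "chi n D = dual_char (weyl_module n D)"

text \<open>Exponent vector of the monomial \<Prod>_j \<Prod>_{i\<in>C_j} x_i.\<close>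
definition xexp :: "nat \<Rightarrow> (nat \<times> nat) set \<Rightarrow> nat \<Rightarrow> nat" where
  "xexp n C i = card {j\<in>{1..n}. i \<in> col C j}"

text \<open>c is the coefficient function of a polynomial in x_1..x_n representing f on the torus.\<close>
definition poly_coeffs :: "nat \<Rightarrow> ((nat \<Rightarrow> nat) \<Rightarrow> complex) \<Rightarrow> ((nat \<Rightarrow> complex) \<Rightarrow> complex) \<Rightarrow> bool" where
  "poly_coeffs n c f \<longleftrightarrow> finite {\<alpha>. c \<alpha> \<noteq> 0} \<and>
     (\<forall>\<alpha>. c \<alpha> \<noteq> 0 \<longrightarrow> (\<forall>i. i \<notin> {1..n} \<longrightarrow> \<alpha> i = 0)) \<and>
     (\<forall>x. (\<forall>i\<in>{1..n}. x i \<noteq> 0) \<longrightarrow>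
        f x = (\<Sum>\<alpha>\<in>{\<alpha>. c \<alpha> \<noteq> 0}. c \<alpha> * (\<Prod>i\<in>{1..n}. x i ^ \<alpha> i)))"

end

theory Submission
  imports Defs "HOL-Computational_Algebra.Polynomial"
begin


lemma lookup_cscale[simp]: "Poly_Mapping.lookup (cscale c p) k = c * Poly_Mapping.lookup p k"
  unfolding cscale_def by (simp add: Poly_Mapping.map.rep_eq when_def)

interpretation cs: vector_space cscale
  by unfold_locales (auto intro!: poly_mapping_eqI simp: lookup_add algebra_simps)

definition rowexp :: "ymon \<Rightarrow> nat \<Rightarrow> nat" where
  "rowexp mo i = (\<Sum>ij\<in>{ij\<in>Poly_Mapping.keys mo. fst ij = i}. Poly_Mapping.lookup mo ij)"

lemma rowexp_superset:
  assumes "finite S" "Poly_Mapping.keys mo \<subseteq> S"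
  shows "rowexp mo i = (\<Sum>ij\<in>{ij\<in>S. fst ij = i}. Poly_Mapping.lookup mo ij)"
  unfolding rowexp_def
  by (rule sum.mono_neutral_left) (use assms in \<open>auto simp: in_keys_iff\<close>)

lemma rowexp_add: "rowexp (a + b) i = rowexp a i + rowexp b i"
proof -
  let ?S = "Poly_Mapping.keys a \<union> Poly_Mapping.keys b"
  have f: "finite ?S" by simp
  have "rowexp (a + b) i = (\<Sum>ij\<in>{ij\<in>?S. fst ij = i}. Poly_Mapping.lookup (a+b) ij)"
    by (rule rowexp_superset[OF f]) (rule keys_add)
  also have "\<dots> = (\<Sum>ij\<in>{ij\<in>?S. fst ij = i}. Poly_Mapping.lookup a ij) +
      (\<Sum>ij\<in>{ij\<in>?S. fst ij = i}. Poly_Mapping.lookup b ij)"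
    by (simp add: lookup_add sum.distrib)
  also have "\<dots> = rowexp a i + rowexp b i"
    using rowexp_superset[OF f, of a i] rowexp_superset[OF f, of b i] by auto
  finally show ?thesis .
qed

lemma rowexp_zero: "rowexp 0 i = 0"
  by (simp add: rowexp_def)

lemma rowexp_single: "rowexp (Poly_Mapping.single (i, j) (Suc 0)) i' = (if i' = i then 1 else 0)"
proof -
  have "{ij\<in>{(i,j)}. fst ij = i'} = (if i' = i then {(i,j)} else {})" by auto
  then show ?thesis by (simp add: rowexp_def)
qed

definition hom :: "(nat \<Rightarrow> nat) \<Rightarrow> ypoly \<Rightarrow> bool" where
  "hom \<alpha> p \<longleftrightarrow> (\<forall>mo\<in>Poly_Mapping.keys p. rowexp mo = \<alpha>)"

lemma hom_zero: "hom \<alpha> 0" by (simp add: hom_def)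

lemma hom_add: "hom \<alpha> p \<Longrightarrow> hom \<alpha> q \<Longrightarrow> hom \<alpha> (p + q)"
  using keys_add[of p q] unfolding hom_def by blast

lemma hom_mult: "hom \<alpha> p \<Longrightarrow> hom \<beta> q \<Longrightarrow> hom (\<lambda>i. \<alpha> i + \<beta> i) (p * q)"
  using keys_mult[of p q] unfolding hom_def by (fastforce simp: rowexp_add)

lemma hom_one: "hom (\<lambda>i. 0) 1"
  by (simp add: hom_def rowexp_zero fun_eq_iff)

lemma hom_of_int: "hom (\<lambda>i. 0) (of_int k)"
  unfolding hom_def by (auto simp: in_keys_iff lookup_of_int when_def rowexp_zero fun_eq_iff split: if_splits)

lemma hom_cscale: "hom \<alpha> p \<Longrightarrow> hom \<alpha> (cscale c p)"
  unfolding hom_def by (auto simp: in_keys_iff)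

lemma hom_sum: "(\<And>x. x \<in> A \<Longrightarrow> hom \<alpha> (f x)) \<Longrightarrow> hom \<alpha> (sum f A)"
  by (induction A rule: infinite_finite_induct) (auto simp: hom_zero hom_add)

lemma hom_prod: "finite A \<Longrightarrow> (\<And>x. x \<in> A \<Longrightarrow> hom (\<alpha> x) (f x)) \<Longrightarrow>
   hom (\<lambda>i. \<Sum>x\<in>A. \<alpha> x i) (prod f A)"
proof (induction A rule: finite_induct)
  case empty then show ?case using hom_one by simp
next
  case (insert a A)
  then show ?case using hom_mult[of "\<alpha> a" "f a" "\<lambda>i. \<Sum>x\<in>A. \<alpha> x i" "prod f A"] by simp
qed

lemma hom_Yent: "hom (\<lambda>i'. if i' = i then 1 else 0) (Yent i j)"
  by (auto simp: Yent_def hom_def rowexp_single hom_zero fun_eq_iff)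

lemma hom_minor:
  assumes "finite R"
  shows "hom (\<lambda>i. if i \<in> R then 1 else 0) (minor R S)"
proof (cases "card R = card S")
  case True
  let ?l = "sorted_list_of_set R"
  have w: "(\<lambda>i. 0 + (\<Sum>k<card R. (if i = ?l ! k then 1 else 0))) = (\<lambda>i. if i \<in> R then 1 else (0::nat))"
  proof
    fix i
    have "(\<Sum>k<card R. (if i = ?l ! k then 1 else 0::nat)) = (\<Sum>r\<in>R. if i = r then 1 else 0)"
    proof -
      have "inj_on (\<lambda>k. ?l ! k) {..<card R}"
        by (rule inj_on_nth) (auto simp: assms)
      moreover have "(\<lambda>k. ?l ! k) ` {..<card R} = R"
        using assms by (metis atLeast_upt image_set length_sorted_list_of_set map_nth set_sorted_list_of_set lessThan_atLeast0)
      ultimately show ?thesis using sum.reindex[of "\<lambda>k. ?l ! k" "{..<card R}" "\<lambda>r. if i = r then 1 else (0::nat)"]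
        by simp
    qed
    also have "\<dots> = (if i \<in> R then 1 else 0)" using assms by simp
    finally show "0 + (\<Sum>k<card R. (if i = ?l ! k then 1 else 0)) = (if i \<in> R then 1 else (0::nat))" by (simp only: add_0)
  qed
  have "hom (\<lambda>i. 0 + (\<Sum>k<card R. (if i = ?l ! k then 1 else 0))) (of_int (sign p) *
        (\<Prod>k<card R. Yent (?l ! k) (sorted_list_of_set S ! p k)))" for p
    by (rule hom_mult[OF hom_of_int]) (rule hom_prod, auto intro: hom_Yent)
  then show ?thesis unfolding minor_def w using True by (auto intro!: hom_sum)
next
  case False
  then show ?thesis by (simp add: minor_def hom_zero)
qed


lemma col_finite: "C \<in> diagrams n \<Longrightarrow> finite (col C j)"
  unfolding diagrams_def col_def
  by (rule finite_subset[of _ "{1..n}"]) auto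

lemma hom_detprod:
  assumes "C \<in> diagrams n"
  shows "hom (xexp n C) (detprod n C D)"
proof -
  have "hom (\<lambda>i. \<Sum>j\<in>{1..n}. if i \<in> col C j then 1 else 0) (detprod n C D)"
    unfolding detprod_def by (rule hom_prod) (auto intro: hom_minor col_finite[OF assms])
  moreover have "(\<lambda>i. \<Sum>j\<in>{1..n}. if i \<in> col C j then 1 else (0::nat)) = xexp n C"
    by (auto simp: xexp_def fun_eq_iff sum.If_cases intro!: arg_cong[where f=card])
  ultimately show ?thesis by simp
qed

lemma xexp_support: "C \<in> diagrams n \<Longrightarrow> i \<notin> {1..n} \<Longrightarrow> xexp n C i = 0"
  unfolding xexp_def diagrams_def col_def by auto

definition xmon :: "nat \<Rightarrow> (nat \<Rightarrow> complex) \<Rightarrow> (nat \<Rightarrow> nat) \<Rightarrow> complex" where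
  "xmon n x \<alpha> = (\<Prod>i\<in>{1..n}. x i ^ \<alpha> i)"

lemma mon_weight_eq:
  assumes "rowexp mo = \<alpha>" "\<And>i. i \<notin> {1..n} \<Longrightarrow> \<alpha> i = 0"
  shows "mon_weight (\<lambda>i. inverse (x i)) mo = xmon n x \<alpha>"
proof -
  let ?K = "Poly_Mapping.keys mo"
  let ?T = "fst ` ?K \<union> {1..n}"
  have fT: "finite ?T" by simp
  have "mon_weight (\<lambda>i. inverse (x i)) mo = (\<Prod>ij\<in>?K. x (fst ij) ^ Poly_Mapping.lookup mo ij)"
    by (simp add: mon_weight_def)
  also have "\<dots> = (\<Prod>i\<in>?T. \<Prod>ij\<in>{ij\<in>?K. fst ij = i}. x (fst ij) ^ Poly_Mapping.lookup mo ij)"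
    by (rule prod.group[symmetric]) auto
  also have "\<dots> = (\<Prod>i\<in>?T. \<Prod>ij\<in>{ij\<in>?K. fst ij = i}. x i ^ Poly_Mapping.lookup mo ij)"
    by (intro prod.cong refl) auto
  also have "\<dots> = (\<Prod>i\<in>?T. x i ^ rowexp mo i)"
    by (simp add: rowexp_def power_sum)
  also have "\<dots> = (\<Prod>i\<in>?T. x i ^ \<alpha> i)" using assms(1) by simp
  also have "\<dots> = xmon n x \<alpha>"
    unfolding xmon_def by (rule prod.mono_neutral_right) (use assms(2) in auto)
  finally show ?thesis .
qed

lemma lookup_diag_act: "Poly_Mapping.lookup (diag_act y f) mo = Poly_Mapping.lookup f mo * mon_weight y mo"
proof -
  have "finite {mo. Poly_Mapping.lookup f mo * mon_weight y mo \<noteq> 0}"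
    by (rule finite_subset[OF _ finite_lookup[of f]]) auto
  then show ?thesis unfolding diag_act_def by simp
qed

lemma diag_act_hom:
  assumes "hom \<alpha> p" "\<And>i. i \<notin> {1..n} \<Longrightarrow> \<alpha> i = 0"
  shows "diag_act (\<lambda>i. inverse (x i)) p = cscale (xmon n x \<alpha>) p"
proof (rule poly_mapping_eqI)
  fix mo
  show "Poly_Mapping.lookup (diag_act (\<lambda>i. inverse (x i)) p) mo = Poly_Mapping.lookup (cscale (xmon n x \<alpha>) p) mo"
  proof (cases "mo \<in> Poly_Mapping.keys p")
    case True
    then have "rowexp mo = \<alpha>" using assms(1) by (auto simp: hom_def)
    then show ?thesis using mon_weight_eq[of mo \<alpha> n x] assms(2) by (simp add: lookup_diag_act)
  next
    case False
    then show ?thesis by (simp add: lookup_diag_act in_keys_iff)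
  qed
qed

lemma diag_act_add: "diag_act y (p + q) = diag_act y p + diag_act y q"
  by (rule poly_mapping_eqI) (simp add: lookup_diag_act lookup_add algebra_simps)

lemma diag_act_cscale: "diag_act y (cscale c p) = cscale c (diag_act y p)"
  by (rule poly_mapping_eqI) (simp add: lookup_diag_act)

lemma diag_act_zero: "diag_act y 0 = 0"
  by (rule poly_mapping_eqI) (simp add: lookup_diag_act)

lemma diag_act_sum: "diag_act y (sum f A) = (\<Sum>a\<in>A. diag_act y (f a))"
  by (induction A rule: infinite_finite_induct) (auto simp: diag_act_zero diag_act_add)


lemma trace_indep:
  assumes fB: "finite B" and fB': "finite B'" and iB: "cs.independent B" and iB': "cs.independent B'"
    and sub: "B \<subseteq> cs.span B'" and fin: "\<And>c. c \<in> B' \<Longrightarrow> f c \<in> cs.span B"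
    and add: "\<And>p q. f (p + q) = f p + f q" and sc: "\<And>a p. f (cscale a p) = cscale a (f p)"
  shows "(\<Sum>b\<in>B. cs.representation B (f b) b) = (\<Sum>c\<in>B'. cs.representation B' (f c) c)"
proof -
  have f0: "f 0 = 0" using sc[of 0 0] by simp
  have fsum: "f (sum g A) = (\<Sum>a\<in>A. f (g a))" for g and A :: "ypoly set"
    by (induction A rule: infinite_finite_induct) (auto simp: f0 add)
  have step1: "cs.representation B (f b) b = (\<Sum>c\<in>B'. cs.representation B' b c * cs.representation B (f c) b)"
    if b: "b \<in> B" for b
  proof -
    have "b = (\<Sum>c\<in>B'. cscale (cs.representation B' b c) c)"
      using cs.sum_representation_eq[OF iB' _ fB' subset_refl, of b] sub b by auto
    then have "f b = (\<Sum>c\<in>B'. cscale (cs.representation B' b c) (f c))"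
      by (metis (no_types, lifting) fsum sc sum.cong)
    then have "cs.representation B (f b) = cs.representation B (\<Sum>c\<in>B'. cscale (cs.representation B' b c) (f c))"
      by simp
    also have "\<dots> = (\<lambda>x. \<Sum>c\<in>B'. cs.representation B (cscale (cs.representation B' b c) (f c)) x)"
      by (rule cs.representation_sum[OF iB]) (auto intro: cs.span_scale fin)
    finally show ?thesis
      by (simp add: cs.representation_scale[OF iB fin])
  qed
  have step2: "(\<Sum>b\<in>B. cs.representation B (f c) b * cs.representation B' b c) = cs.representation B' (f c) c"
    if c: "c \<in> B'" for c
  proof -
    have "cs.representation B' (\<Sum>b\<in>B. cscale (cs.representation B (f c) b) b) =
        (\<lambda>x. \<Sum>b\<in>B. cs.representation B' (cscale (cs.representation B (f c) b) b) x)"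
      by (rule cs.representation_sum[OF iB']) (use sub in \<open>auto intro: cs.span_scale\<close>)
    also have "\<dots> = (\<lambda>x. \<Sum>b\<in>B. cs.representation B (f c) b * cs.representation B' b x)"
    proof
      fix x show "(\<Sum>b\<in>B. cs.representation B' (cscale (cs.representation B (f c) b) b) x) =
          (\<Sum>b\<in>B. cs.representation B (f c) b * cs.representation B' b x)"
        by (rule sum.cong[OF refl]) (use sub in \<open>auto simp: cs.representation_scale[OF iB']\<close>)
    qed
    finally have "cs.representation B' (\<Sum>b\<in>B. cscale (cs.representation B (f c) b) b) c =
        (\<Sum>b\<in>B. cs.representation B (f c) b * cs.representation B' b c)" by simp
    moreover have "(\<Sum>b\<in>B. cscale (cs.representation B (f c) b) b) = f c"
      by (rule cs.sum_representation_eq[OF iB fin[OF c] fB subset_refl])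
    ultimately show ?thesis by simp
  qed
  have "(\<Sum>b\<in>B. cs.representation B (f b) b) =
      (\<Sum>b\<in>B. \<Sum>c\<in>B'. cs.representation B' b c * cs.representation B (f c) b)"
    using step1 by simp
  also have "\<dots> = (\<Sum>c\<in>B'. \<Sum>b\<in>B. cs.representation B (f c) b * cs.representation B' b c)"
    by (subst sum.swap) (simp add: mult.commute)
  also have "\<dots> = (\<Sum>c\<in>B'. cs.representation B' (f c) c)"
    using step2 by simp
  finally show ?thesis .
qed


definition Cs :: "nat \<Rightarrow> (nat \<times> nat) set \<Rightarrow> (nat \<times> nat) set set" where
  "Cs n D = {C. C \<in> diagrams n \<and> diag_le n C D}"

definition Sa :: "nat \<Rightarrow> (nat \<times> nat) set \<Rightarrow> (nat \<Rightarrow> nat) \<Rightarrow> ypoly set" where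
  "Sa n D \<alpha> = {detprod n C D | C. C \<in> diagrams n \<and> diag_le n C D \<and> xexp n C = \<alpha>}"

lemma finite_diagrams: "finite (diagrams n)"
  unfolding diagrams_def by simp

lemma finite_Cs: "finite (Cs n D)"
  unfolding Cs_def using finite_diagrams by simp

lemma Sa_sub: "Sa n D \<alpha> \<subseteq> (\<lambda>C. detprod n C D) ` Cs n D"
  unfolding Sa_def Cs_def by auto

lemma finite_Sa: "finite (Sa n D \<alpha>)"
  using finite_subset[OF Sa_sub] finite_Cs by blast

lemma Sa_empty: "\<alpha> \<notin> xexp n ` Cs n D \<Longrightarrow> Sa n D \<alpha> = {}"
  unfolding Sa_def Cs_def by auto

lemma hom_Sa: "p \<in> Sa n D \<alpha> \<Longrightarrow> hom \<alpha> p"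
  unfolding Sa_def using hom_detprod by auto

lemma supp_A: "\<alpha> \<in> xexp n ` Cs n D \<Longrightarrow> i \<notin> {1..n} \<Longrightarrow> \<alpha> i = 0"
  unfolding Cs_def using xexp_support by auto

lemma gens_eq: "{detprod n C D | C. C \<in> diagrams n \<and> diag_le n C D} = (\<Union>\<alpha>\<in>xexp n ` Cs n D. Sa n D \<alpha>)"
  unfolding Sa_def Cs_def by auto

lemma hom_nonzero_unique: "hom \<alpha> p \<Longrightarrow> hom \<beta> p \<Longrightarrow> p \<noteq> 0 \<Longrightarrow> \<alpha> = \<beta>"
  unfolding hom_def by (metis all_not_in_conv keys_eq_empty)

lemma chi_formula:
  "chi n D x = (\<Sum>\<alpha>\<in>xexp n ` Cs n D. of_nat (cdim (cspan (Sa n D \<alpha>))) * xmon n x \<alpha>)"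
proof -
  let ?A = "xexp n ` Cs n D"
  have fA: "finite ?A" using finite_Cs by simp
  have "\<forall>\<alpha>. \<exists>B. B \<subseteq> Sa n D \<alpha> \<and> cs.independent B \<and> Sa n D \<alpha> \<subseteq> cs.span B \<and> card B = cdim (Sa n D \<alpha>)"
    by (meson cs.basis_exists)
  then obtain Bf where Bf: "\<And>\<alpha>. Bf \<alpha> \<subseteq> Sa n D \<alpha>" "\<And>\<alpha>. cs.independent (Bf \<alpha>)"
     "\<And>\<alpha>. Sa n D \<alpha> \<subseteq> cs.span (Bf \<alpha>)" "\<And>\<alpha>. card (Bf \<alpha>) = cdim (Sa n D \<alpha>)"
    by metis
  define B' where "B' = (\<Union>\<alpha>\<in>?A. Bf \<alpha>)"
  have fBf: "finite (Bf \<alpha>)" for \<alpha> using Bf(1) finite_Sa finite_subset by blast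
  have fB': "finite B'" unfolding B'_def using fA fBf by blast
  have homB: "hom \<alpha> b" if "b \<in> Bf \<alpha>" for b \<alpha> using Bf(1) that hom_Sa by blast
  have nz: "b \<noteq> 0" if "b \<in> Bf \<alpha>" for b \<alpha> using Bf(2)[of \<alpha>] cs.dependent_zero that by blast
  have disj: "Bf \<alpha> \<inter> Bf \<beta> = {}" if "\<alpha> \<noteq> \<beta>" for \<alpha> \<beta>
    using homB nz hom_nonzero_unique that by blast
  have indB': "cs.independent B'"
  proof (rule cs.independent_if_scalars_zero[OF fB'])
    fix g v assume sum0: "(\<Sum>v\<in>B'. cscale (g v) v) = 0" and v: "v \<in> B'"
    then obtain \<beta> where \<beta>: "\<beta> \<in> ?A" "v \<in> Bf \<beta>" unfolding B'_def by blast
    have "(\<Sum>w\<in>Bf \<beta>. cscale (g w) w) = 0"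
    proof (rule poly_mapping_eqI)
      fix mo
      show "Poly_Mapping.lookup (\<Sum>w\<in>Bf \<beta>. cscale (g w) w) mo = Poly_Mapping.lookup 0 mo"
      proof (cases "rowexp mo = \<beta>")
        case True
        have "Poly_Mapping.lookup (\<Sum>w\<in>Bf \<beta>. cscale (g w) w) mo = (\<Sum>w\<in>Bf \<beta>. g w * Poly_Mapping.lookup w mo)"
          by (simp add: lookup_sum)
        also have "\<dots> = (\<Sum>w\<in>B'. g w * Poly_Mapping.lookup w mo)"
        proof (rule sum.mono_neutral_left[OF fB'])
          show "Bf \<beta> \<subseteq> B'" unfolding B'_def using \<beta> by blast
          show "\<forall>i\<in>B' - Bf \<beta>. g i * Poly_Mapping.lookup i mo = 0"
          proof
            fix w assume w: "w \<in> B' - Bf \<beta>"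
            then obtain \<alpha> where wa: "w \<in> Bf \<alpha>" "\<alpha> \<noteq> \<beta>" unfolding B'_def by blast
            have "mo \<notin> Poly_Mapping.keys w" using homB[OF wa(1)] wa(2) True unfolding hom_def by auto
            then show "g w * Poly_Mapping.lookup w mo = 0" by (simp add: in_keys_iff)
          qed
        qed
        also have "\<dots> = Poly_Mapping.lookup (\<Sum>w\<in>B'. cscale (g w) w) mo"
          by (simp add: lookup_sum)
        finally show ?thesis using sum0 by simp
      next
        case False
        have "mo \<notin> Poly_Mapping.keys w" if "w \<in> Bf \<beta>" for w
          using homB[OF that] False unfolding hom_def by blast
        then show ?thesis by (simp add: lookup_sum in_keys_iff)
      qed
    qed
    then show "g v = 0"
      using cs.independentD[OF Bf(2)[of \<beta>] fBf[of \<beta>] subset_refl _ \<beta>(2)] by blast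
  qed
  define W where "W = weyl_module n D"
  have W_eq: "W = cs.span (\<Union>\<alpha>\<in>?A. Sa n D \<alpha>)"
    unfolding W_def weyl_module_def gens_eq ..
  have B'U: "B' \<subseteq> (\<Union>\<alpha>\<in>?A. Sa n D \<alpha>)"
    unfolding B'_def using Bf(1) by (rule UN_mono[OF subset_refl])
  have B'W: "B' \<subseteq> W"
    unfolding W_eq using B'U cs.span_superset by (rule order_trans)
  have WB': "W \<subseteq> cs.span B'"
  proof -
    have "(\<Union>\<alpha>\<in>?A. Sa n D \<alpha>) \<subseteq> cs.span B'"
    proof
      fix p assume "p \<in> (\<Union>\<alpha>\<in>?A. Sa n D \<alpha>)"
      then obtain \<alpha> where "\<alpha> \<in> ?A" "p \<in> Sa n D \<alpha>" by blast
      moreover have "cs.span (Bf \<alpha>) \<subseteq> cs.span B'"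
        using \<open>\<alpha> \<in> ?A\<close> by (intro cs.span_mono) (auto simp: B'_def)
      ultimately show "p \<in> cs.span B'" using Bf(3) by blast
    qed
    then show ?thesis unfolding W_eq by (rule cs.span_minimal[OF _ cs.subspace_span])
  qed
  define P where "P = (\<lambda>B. B \<subseteq> W \<and> \<not> cs.dependent B \<and> W \<subseteq> cs.span B)"
  have PB': "P B'" unfolding P_def using B'W indB' WB' by blast
  define B where "B = (SOME B. P B)"
  have PB: "P B" unfolding B_def using PB' by (rule someI)
  then have BW: "B \<subseteq> W" and indB: "cs.independent B" and WB: "W \<subseteq> cs.span B" unfolding P_def by auto
  have BB': "B \<subseteq> cs.span B'" using BW WB' by (rule order_trans)
  have fB: "finite B" using cs.independent_span_bound[OF fB' indB BB'] by (rule conjunct1)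
  let ?f = "diag_act (\<lambda>i. inverse (x i))"
  have fb: "?f b = cscale (xmon n x \<alpha>) b" if "\<alpha> \<in> ?A" "b \<in> Bf \<alpha>" for b \<alpha>
    using diag_act_hom[OF homB[OF that(2)] supp_A[OF that(1)]] .
  have tr: "chi n D x = (\<Sum>b\<in>B. cs.representation B (?f b) b)"
    unfolding chi_def dual_char_def char_mod_def trace_on_def W_def[symmetric] P_def[symmetric] B_def[symmetric]
    by simp
  also have "\<dots> = (\<Sum>c\<in>B'. cs.representation B' (?f c) c)"
  proof (rule trace_indep[OF fB fB' indB indB'])
    show "B \<subseteq> cs.span B'" by (rule BB')
    show "?f c \<in> cs.span B" if "c \<in> B'" for c
    proof -
      from that obtain \<alpha> where "\<alpha> \<in> ?A" "c \<in> Bf \<alpha>" unfolding B'_def by blast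
      then have "?f c = cscale (xmon n x \<alpha>) c" by (rule fb)
      moreover have "c \<in> cs.span B" using \<open>c \<in> B'\<close> B'W WB by blast
      ultimately show ?thesis by (simp add: cs.span_scale)
    qed
  qed (simp_all add: diag_act_add diag_act_cscale)
  also have "\<dots> = (\<Sum>\<alpha>\<in>?A. \<Sum>c\<in>Bf \<alpha>. cs.representation B' (?f c) c)"
    unfolding B'_def by (rule sum.UNION_disjoint) (use fA fBf disj in auto)
  also have "\<dots> = (\<Sum>\<alpha>\<in>?A. \<Sum>c\<in>Bf \<alpha>. xmon n x \<alpha>)"
  proof (intro sum.cong refl)
    fix \<alpha> c assume a: "\<alpha> \<in> ?A" and c: "c \<in> Bf \<alpha>"
    then have cB': "c \<in> B'" unfolding B'_def by blast
    have "cs.representation B' (?f c) c = cs.representation B' (cscale (xmon n x \<alpha>) c) c"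
      using fb[OF a c] by simp
    also have "\<dots> = xmon n x \<alpha> * cs.representation B' c c"
      using cs.representation_scale[OF indB' cs.span_base[OF cB']] by simp
    also have "\<dots> = xmon n x \<alpha>"
      using cs.representation_basis[OF indB' cB'] by simp
    finally show "cs.representation B' (?f c) c = xmon n x \<alpha>" .
  qed
  also have "\<dots> = (\<Sum>\<alpha>\<in>?A. of_nat (cdim (cspan (Sa n D \<alpha>))) * xmon n x \<alpha>)"
    using Bf(4) by (simp add: cs.dim_span)
  finally show ?thesis .
qed


lemma digits_inj:
  fixes a b :: "nat \<Rightarrow> nat"
  assumes "\<And>i. i < n \<Longrightarrow> a i < M" "\<And>i. i < n \<Longrightarrow> b i < M"
    "(\<Sum>i<n. a i * M ^ i) = (\<Sum>i<n. b i * M ^ i)" "i < n"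
  shows "a i = b i"
  using assms
proof (induction n arbitrary: a b i)
  case 0 then show ?case by simp
next
  case (Suc n)
  let ?A = "\<Sum>i<n. a (Suc i) * M ^ i" and ?B = "\<Sum>i<n. b (Suc i) * M ^ i"
  have sa: "(\<Sum>i<Suc n. a i * M ^ i) = a 0 + M * ?A"
    unfolding sum.lessThan_Suc_shift by (simp add: sum_distrib_left power_Suc mult_ac del: sum.lessThan_Suc)
  have sb: "(\<Sum>i<Suc n. b i * M ^ i) = b 0 + M * ?B"
    unfolding sum.lessThan_Suc_shift by (simp add: sum_distrib_left power_Suc mult_ac del: sum.lessThan_Suc)
  have a0: "a 0 < M" and b0: "b 0 < M" using Suc.prems by auto
  have eq: "a 0 + M * ?A = b 0 + M * ?B" using Suc.prems(3) sa sb by simp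
  have "(a 0 + M * ?A) mod M = a 0" using a0 by simp
  moreover have "(b 0 + M * ?B) mod M = b 0" using b0 by simp
  ultimately have e0: "a 0 = b 0" using eq by simp
  have "(a 0 + M * ?A) div M = ?A" using a0 by simp
  moreover have "(b 0 + M * ?B) div M = ?B" using b0 by simp
  ultimately have eA: "?A = ?B" using eq by simp
  have IH: "a (Suc j) = b (Suc j)" if "j < n" for j
    using Suc.IH[of "\<lambda>i. a (Suc i)" "\<lambda>i. b (Suc i)" j] Suc.prems eA that by auto
  show ?case
  proof (cases "i")
    case 0 then show ?thesis using e0 by simp
  next
    case (Suc j) then show ?thesis using IH Suc.prems(4) by auto
  qed
qed

lemma poly_coeffs_unique:
  assumes pc: "poly_coeffs n c f" and pc': "poly_coeffs n c' f"
  shows "c = c'"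
proof -
  define E where "E = {\<alpha>. c \<alpha> \<noteq> 0} \<union> {\<alpha>. c' \<alpha> \<noteq> 0}"
  have fE: "finite E" using pc pc' unfolding E_def poly_coeffs_def by auto
  have suppE: "\<alpha> i = 0" if "\<alpha> \<in> E" "i \<notin> {1..n}" for \<alpha> i
    using pc pc' that unfolding E_def poly_coeffs_def by auto
  have zero: "(\<Sum>\<alpha>\<in>E. (c \<alpha> - c' \<alpha>) * (\<Prod>i\<in>{1..n}. x i ^ \<alpha> i)) = 0"
    if x: "\<forall>i\<in>{1..n}. x i \<noteq> 0" for x
  proof -
    have "f x = (\<Sum>\<alpha>\<in>{\<alpha>. c \<alpha> \<noteq> 0}. c \<alpha> * (\<Prod>i\<in>{1..n}. x i ^ \<alpha> i))"
      using pc x unfolding poly_coeffs_def by blast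
    also have "\<dots> = (\<Sum>\<alpha>\<in>E. c \<alpha> * (\<Prod>i\<in>{1..n}. x i ^ \<alpha> i))"
      by (rule sum.mono_neutral_left[OF fE]) (auto simp: E_def)
    finally have 1: "f x = (\<Sum>\<alpha>\<in>E. c \<alpha> * (\<Prod>i\<in>{1..n}. x i ^ \<alpha> i))" .
    have "f x = (\<Sum>\<alpha>\<in>{\<alpha>. c' \<alpha> \<noteq> 0}. c' \<alpha> * (\<Prod>i\<in>{1..n}. x i ^ \<alpha> i))"
      using pc' x unfolding poly_coeffs_def by blast
    also have "\<dots> = (\<Sum>\<alpha>\<in>E. c' \<alpha> * (\<Prod>i\<in>{1..n}. x i ^ \<alpha> i))"
      by (rule sum.mono_neutral_left[OF fE]) (auto simp: E_def)
    finally have 2: "f x = (\<Sum>\<alpha>\<in>E. c' \<alpha> * (\<Prod>i\<in>{1..n}. x i ^ \<alpha> i))" .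
    show ?thesis using 1 2 by (simp add: left_diff_distrib sum_subtractf)
  qed
  define M where "M = Suc (Max (insert 0 {\<alpha> i |\<alpha> i. \<alpha> \<in> E \<and> i \<in> {1..n}}))"
  have fin_digits: "finite {\<alpha> i |\<alpha> i. \<alpha> \<in> E \<and> i \<in> {1..n}}"
  proof -
    have "{\<alpha> i |\<alpha> i. \<alpha> \<in> E \<and> i \<in> {1..n}} = (\<lambda>(\<alpha>, i). \<alpha> i) ` (E \<times> {1..n})" by force
    then show ?thesis using fE by simp
  qed
  have Mbound: "\<alpha> i < M" if "\<alpha> \<in> E" "i \<in> {1..n}" for \<alpha> i
  proof -
    have "\<alpha> i \<le> Max (insert 0 {\<alpha> i |\<alpha> i. \<alpha> \<in> E \<and> i \<in> {1..n}})"
      by (rule Max_ge) (use fin_digits that in auto)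
    then show ?thesis unfolding M_def by simp
  qed
  define e where "e \<alpha> = (\<Sum>i\<in>{1..n}. \<alpha> i * M ^ (i - 1))" for \<alpha> :: "nat \<Rightarrow> nat"
  have e_shift: "e \<alpha> = (\<Sum>i<n. \<alpha> (Suc i) * M ^ i)" for \<alpha>
    unfolding e_def image_Suc_lessThan[symmetric] by (subst sum.reindex) auto
  have e_inj: "\<alpha> = \<beta>" if "\<alpha> \<in> E" "\<beta> \<in> E" "e \<alpha> = e \<beta>" for \<alpha> \<beta>
  proof
    fix i show "\<alpha> i = \<beta> i"
    proof (cases "i \<in> {1..n}")
      case True
      then obtain j where j: "i = Suc j" "j < n" by (cases i) auto
      have "\<alpha> (Suc j) = \<beta> (Suc j)"
        by (rule digits_inj[of n "\<lambda>i. \<alpha> (Suc i)" M "\<lambda>i. \<beta> (Suc i)"])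
           (use that Mbound j e_shift in auto)
      then show ?thesis using j by simp
    next
      case False then show ?thesis using suppE[OF that(1) False] suppE[OF that(2) False] by simp
    qed
  qed
  define p where "p = (\<Sum>\<alpha>\<in>E. monom (c \<alpha> - c' \<alpha>) (e \<alpha>))"
  have root: "poly p t = 0" if t: "t \<noteq> 0" for t :: complex
  proof -
    define x where "x i = t ^ (M ^ (i - 1))" for i
    have x: "\<forall>i\<in>{1..n}. x i \<noteq> 0" using t by (simp add: x_def)
    have "(\<Prod>i\<in>{1..n}. x i ^ \<alpha> i) = t ^ e \<alpha>" for \<alpha>
      unfolding x_def e_def by (simp add: power_sum power_mult[symmetric] mult.commute)
    then have "poly p t = (\<Sum>\<alpha>\<in>E. (c \<alpha> - c' \<alpha>) * (\<Prod>i\<in>{1..n}. x i ^ \<alpha> i))"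
      by (simp add: p_def poly_sum poly_monom)
    then show ?thesis using zero[OF x] by simp
  qed
  have "p = 0"
  proof (rule ccontr)
    assume "p \<noteq> 0"
    then have "finite {t. poly p t = 0}" by (rule poly_roots_finite)
    moreover have "- {0} \<subseteq> {t. poly p t = 0}" using root by auto
    ultimately have "finite (- {0::complex})" by (rule finite_subset[rotated])
    then show False by (simp add: infinite_UNIV_char_0)
  qed
  have "c \<beta> = c' \<beta>" for \<beta>
  proof (cases "\<beta> \<in> E")
    case True
    have "coeff p (e \<beta>) = (\<Sum>\<alpha>\<in>E. if e \<alpha> = e \<beta> then c \<alpha> - c' \<alpha> else 0)"
      by (simp add: p_def coeff_sum)
    also have "\<dots> = (\<Sum>\<alpha>\<in>E. if \<alpha> = \<beta> then c \<alpha> - c' \<alpha> else 0)"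
      by (rule sum.cong[OF refl]) (use e_inj True in auto)
    also have "\<dots> = c \<beta> - c' \<beta>" using True fE by simp
    finally show ?thesis using \<open>p = 0\<close> by simp
  next
    case False then show ?thesis by (simp add: E_def)
  qed
  then show ?thesis by auto
qed

theorem corollary5p5:
  fixes n :: nat and D C1 :: "(nat \<times> nat) set"
  assumes "D \<in> diagrams n" and "C1 \<in> diagrams n" and "diag_le n C1 D"
  shows "(\<exists>c. poly_coeffs n c (chi n D)) \<and>
    (\<forall>c. poly_coeffs n c (chi n D) \<longrightarrow>
       c (xexp n C1) = of_nat (cdim (cspan
          {detprod n C D | C. C \<in> diagrams n \<and> diag_le n C D \<and> xexp n C = xexp n C1})))"
proof -
  let ?A = "xexp n ` Cs n D"
  define c0 where "c0 \<alpha> = (of_nat (cdim (cspan (Sa n D \<alpha>))) :: complex)" for \<alpha>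
  have sub: "{\<alpha>. c0 \<alpha> \<noteq> 0} \<subseteq> ?A"
  proof
    fix \<alpha> assume "\<alpha> \<in> {\<alpha>. c0 \<alpha> \<noteq> 0}"
    then show "\<alpha> \<in> ?A" by (cases "\<alpha> \<in> ?A") (auto simp: c0_def Sa_empty cs.dim_eq_card_independent[OF cs.independent_empty])
  qed
  have fA: "finite ?A" by (rule finite_imageI[OF finite_Cs])
  have pc0: "poly_coeffs n c0 (chi n D)"
    unfolding poly_coeffs_def
  proof (intro conjI allI impI)
    show "finite {\<alpha>. c0 \<alpha> \<noteq> 0}" using finite_subset[OF sub fA] .
  next
    fix \<alpha> i assume "c0 \<alpha> \<noteq> 0" "i \<notin> {1..n}"
    from \<open>c0 \<alpha> \<noteq> 0\<close> have "\<alpha> \<in> {\<alpha>. c0 \<alpha> \<noteq> 0}" by simp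
    then have "\<alpha> \<in> ?A" using sub by (rule rev_subsetD)
    then show "\<alpha> i = 0" using \<open>i \<notin> {1..n}\<close> by (rule supp_A)
  next
    fix x :: "nat \<Rightarrow> complex"
    have "chi n D x = (\<Sum>\<alpha>\<in>?A. c0 \<alpha> * xmon n x \<alpha>)"
      unfolding chi_formula c0_def ..
    also have "\<dots> = (\<Sum>\<alpha>\<in>{\<alpha>. c0 \<alpha> \<noteq> 0}. c0 \<alpha> * xmon n x \<alpha>)"
      by (rule sum.mono_neutral_right[OF fA sub]) auto
    finally show "chi n D x = (\<Sum>\<alpha>\<in>{\<alpha>. c0 \<alpha> \<noteq> 0}. c0 \<alpha> * (\<Prod>i\<in>{1..n}. x i ^ \<alpha> i))"
      by (simp add: xmon_def)
  qed
  show ?thesis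
  proof (intro conjI allI impI)
    show "\<exists>c. poly_coeffs n c (chi n D)" by (rule exI[of _ c0]) (rule pc0)
  next
    fix c assume "poly_coeffs n c (chi n D)"
    then have "c = c0" by (rule poly_coeffs_unique[OF _ pc0])
    then show "c (xexp n C1) = of_nat (cdim (cspan
          {detprod n C D | C. C \<in> diagrams n \<and> diag_le n C D \<and> xexp n C = xexp n C1}))"
      by (simp add: c0_def Sa_def)
  qed
qed

end
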